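(* Run the Unbiased Space Saving sketch with $m$ bins on an i.i.d. stream of items drawn from a discrete distribution with probabilities $p_1 \ge p_2 \ge \cdots$. Let $\alpha = \sum_{j > m} p_j$. For any $\alpha' < \alpha$, with probability $1$, $\hat{N}_{min}(t) > \alpha' t / m$ for all sufficiently large $t$.
   Context: Unbiased Space Saving sketch with $m$ bins: maintain $m$ (item, count) pairs, counts initialized to $0$. For each new row with item $x_{new}$: if $x_{new}$ is a label, increment its count by $1$; otherwise choose a pair with the smallest count $\hat{N}_{min}$ (uniformly at random among all pairs sharing the smallest count), increment its count by $1$, and with probability $1/(\hat{N}_{min}+1)$ replace its label by $x_{new}$. $\hat{N}_{min}(t)$ is the smallest count among the $m$ pairs after $t$ rows have been processed. *)

theory Defs
  imports "HOL-Probability.Probability"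
begin

text \<open>State of the Unbiased Space Saving sketch: a list of m (label, count) pairs.
  Labels are optional: initially no bin carries a label.\<close>
type_synonym uss_sketch = "(nat option \<times> nat) list"

definition uss_init :: "nat \<Rightarrow> uss_sketch" where
  "uss_init m = replicate m (None, 0)"

definition uss_nmin :: "uss_sketch \<Rightarrow> nat" where
  "uss_nmin s = Min (snd ` set s)"

text \<open>One update with new item x; u and v are independent uniform [0,1) variables:
  u selects uniformly a pair among those with smallest count, and the label is
  replaced iff v < 1/(Nmin+1), i.e. with probability 1/(Nmin+1).\<close>
definition uss_step :: "uss_sketch \<Rightarrow> nat \<times> real \<times> real \<Rightarrow> uss_sketch" where
  "uss_step s r = (case r of (x, u, v) \<Rightarrow>
     if Some x \<in> fst ` set s
     then map (\<lambda>(l, c). if l = Some x then (l, Suc c) else (l, c)) s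
     else (let n = uss_nmin s;
               mins = filter (\<lambda>i. snd (s ! i) = n) [0..<length s];
               i = mins ! nat \<lfloor>u * real (length mins)\<rfloor>;
               l = fst (s ! i); c = snd (s ! i)
           in s[i := (if v < 1 / real (Suc n) then Some x else l, Suc c)]))"

fun uss_run :: "nat \<Rightarrow> nat \<Rightarrow> (nat \<times> real \<times> real) stream \<Rightarrow> uss_sketch" where
  "uss_run m 0 \<omega> = uss_init m"
| "uss_run m (Suc t) \<omega> = uss_step (uss_run m t \<omega>) (\<omega> !! t)"

definition uss_Nmin :: "nat \<Rightarrow> nat \<Rightarrow> (nat \<times> real \<times> real) stream \<Rightarrow> nat" where
  "uss_Nmin m t \<omega> = uss_nmin (uss_run m t \<omega>)"

definition uss_row :: "nat pmf \<Rightarrow> (nat \<times> real \<times> real) measure" where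
  "uss_row P = measure_pmf P \<Otimes>\<^sub>M
     (uniform_measure lborel {0..<1::real} \<Otimes>\<^sub>M uniform_measure lborel {0..<1::real})"

end

theory Submission imports Defs begin

definition ind :: "uss_sketch \<Rightarrow> nat \<times> real \<times> real \<Rightarrow> bool" where
 "ind s r = (Some (fst r) \<notin> fst ` set s \<and> 0 \<le> fst (snd r) \<and> fst (snd r) < 1)"

fun runf :: "uss_sketch \<Rightarrow> nat \<Rightarrow> (nat \<times> real \<times> real) stream \<Rightarrow> uss_sketch" where
  "runf s 0 \<omega> = s"
| "runf s (Suc t) \<omega> = runf (uss_step s (shd \<omega>)) t (stl \<omega>)"

fun Kf :: "uss_sketch \<Rightarrow> nat \<Rightarrow> (nat \<times> real \<times> real) stream \<Rightarrow> nat" where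
  "Kf s 0 \<omega> = 0"
| "Kf s (Suc t) \<omega> = (if ind s (shd \<omega>) then 1 else 0) + Kf (uss_step s (shd \<omega>)) t (stl \<omega>)"

definition FL :: "nat \<Rightarrow> uss_sketch \<Rightarrow> nat" where
  "FL L s = (\<Sum>i<length s. min (snd (s!i)) L)"

lemma length_step[simp]: "length (uss_step s r) = length s"
  by (cases r) (auto simp: uss_step_def Let_def)

lemma upd_mono: "snd (s!i) \<le> snd (s[j := (l, Suc (snd (s!j)))] ! i)"
  by (cases "i = j"; cases "j < length s") (auto simp: list_update_beyond)

lemma step_mono: "i < length s \<Longrightarrow> snd (s!i) \<le> snd (uss_step s r ! i)"
proof (cases r)
  case (fields x u v)
  assume i: "i < length s"
  show ?thesis
  proof (cases "Some x \<in> fst ` set s")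
    case True
    then show ?thesis using i by (auto simp: uss_step_def fields split: prod.splits)
  next
    case False
    then show ?thesis unfolding uss_step_def fields Let_def by (simp add: upd_mono)
  qed
qed

lemma step_ind:
  assumes "s \<noteq> []" "ind s r"
  shows "\<exists>i<length s. snd (s!i) = uss_nmin s \<and> (\<exists>l. uss_step s r = s[i := (l, Suc (snd (s!i)))])"
proof -
  obtain x u v where r: "r = (x,u,v)" by (cases r) auto
  have nl: "Some x \<notin> fst ` set s" and u: "0 \<le> u" "u < 1" using assms(2) r by (auto simp: ind_def)
  define n where "n = uss_nmin s"
  define mins where "mins = filter (\<lambda>i. snd (s ! i) = n) [0..<length s]"
  define k where "k = nat \<lfloor>u * real (length mins)\<rfloor>"
  have "n \<in> snd ` set s" unfolding n_def uss_nmin_def using assms(1) by (intro Min_in) auto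
  then obtain j where "j < length s" "snd (s!j) = n" by (auto simp: in_set_conv_nth)
  then have "j \<in> set mins" by (auto simp: mins_def)
  then have lp: "length mins > 0" by (cases mins) auto
  have "u * real (length mins) < real (length mins)" using u lp by simp
  then have "k < length mins"
  proof -
    have "real_of_int \<lfloor>u * real (length mins)\<rfloor> < real (length mins)"
      using \<open>u * real (length mins) < real (length mins)\<close> of_int_floor_le[of "u * real (length mins)"] by linarith
    then have "\<lfloor>u * real (length mins)\<rfloor> < int (length mins)" by linarith
    moreover have "0 \<le> \<lfloor>u * real (length mins)\<rfloor>" using u by simp
    ultimately show ?thesis by (simp add: k_def nat_less_iff)
  qed
  then have "mins ! k \<in> set mins" by simp
  then have i: "mins ! k < length s" "snd (s ! (mins!k)) = n" by (auto simp: mins_def)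
  have "uss_step s r = s[mins!k := (if v < 1 / real (Suc n) then Some x else fst (s ! (mins!k)), Suc (snd (s!(mins!k))))]"
    using nl unfolding r uss_step_def by (simp add: Let_def n_def[symmetric] mins_def[symmetric] k_def[symmetric])
  then show ?thesis using i n_def by blast
qed

lemma FL_mono_step: "FL L s \<le> FL L (uss_step s r)"
  unfolding FL_def by (auto intro!: sum_mono min.mono step_mono)

lemma FL_update:
  assumes "i < length s"
  shows "FL L (s[i := y]) + min (snd (s!i)) L = FL L s + min (snd y) L"
proof -
  have "FL L (s[i := y]) = (\<Sum>j\<in>{..<length s} - {i}. min (snd (s!j)) L) + min (snd y) L"
    unfolding FL_def using assms by (simp add: sum.remove[of _ i] nth_list_update add.commute)
  moreover have "FL L s = (\<Sum>j\<in>{..<length s} - {i}. min (snd (s!j)) L) + min (snd (s!i)) L"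
    unfolding FL_def using assms by (simp add: sum.remove[of _ i] add.commute)
  ultimately show ?thesis by simp
qed

lemma FL_step_ind:
  assumes "s \<noteq> []" "ind s r" "uss_nmin s < L"
  shows "FL L s + 1 \<le> FL L (uss_step s r)"
proof -
  obtain i l where i: "i < length s" "snd (s!i) = uss_nmin s" "uss_step s r = s[i := (l, Suc (snd (s!i)))]"
    using step_ind[OF assms(1,2)] by blast
  show ?thesis using FL_update[OF i(1), of L "(l, Suc (snd (s!i)))"] i assms(3) by simp
qed

lemma FL_le: "FL L s \<le> length s * L"
proof -
  have "FL L s \<le> (\<Sum>i<length s. L)" unfolding FL_def by (intro sum_mono) auto
  then show ?thesis by simp
qed

lemma nmin_ge:
  assumes "s \<noteq> []" "length s * L \<le> FL L s"
  shows "L \<le> uss_nmin s"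
proof -
  have all: "L \<le> snd (s!i)" if "i < length s" for i
  proof (rule ccontr)
    assume "\<not> L \<le> snd (s!i)"
    then have "FL L s < (\<Sum>i<length s. L)" unfolding FL_def
      by (intro sum_strict_mono_ex1) (use that in \<open>auto intro!: bexI[of _ i]\<close>)
    then show False using assms(2) by simp
  qed
  show ?thesis unfolding uss_nmin_def using assms(1) all
    by (subst Min_ge_iff) (auto simp: in_set_conv_nth, metis all snd_conv)
qed

lemma runf_Suc: "runf s (Suc t) \<omega> = uss_step (runf s t \<omega>) (\<omega> !! t)"
  by (induction t arbitrary: s \<omega>) auto

lemma Kf_Suc: "Kf s (Suc t) \<omega> = Kf s t \<omega> + (if ind (runf s t \<omega>) (\<omega> !! t) then 1 else 0)"
  by (induction t arbitrary: s \<omega>) auto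

lemma runf_length[simp]: "length (runf s t \<omega>) = length s"
  by (induction t arbitrary: s \<omega>) auto

declare runf.simps(2)[simp del] Kf.simps(2)[simp del]

lemma uss_run_runf: "uss_run m t \<omega> = runf (uss_init m) t \<omega>"
  by (induction t) (auto simp: runf_Suc)

lemma FL_full: "L \<le> uss_nmin s \<Longrightarrow> FL L s = length s * L"
proof -
  assume a: "L \<le> uss_nmin s"
  have "snd (s!i) \<ge> L" if "i < length s" for i
  proof -
    have "uss_nmin s \<le> snd (s!i)" unfolding uss_nmin_def using that by (intro Min_le) auto
    then show ?thesis using a by simp
  qed
  then have "FL L s = (\<Sum>i<length s. L)" unfolding FL_def by (intro sum.cong) auto
  then show ?thesis by simp
qed

lemma invariant:
  assumes "s \<noteq> []"
  shows "min (Kf s t \<omega>) (length s * L) \<le> FL L (runf s t \<omega>)"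
proof (induction t)
  case 0 then show ?case by simp
next
  case (Suc t)
  let ?s = "runf s t \<omega>"
  have ne: "?s \<noteq> []" using assms by (metis runf_length length_0_conv)
  show ?case
  proof (cases "ind ?s (\<omega> !! t) \<and> uss_nmin ?s < L")
    case True
    then show ?thesis using FL_step_ind[OF ne, of "\<omega> !! t" L] Suc
      by (simp add: runf_Suc Kf_Suc)
  next
    case False
    show ?thesis
    proof (cases "ind ?s (\<omega> !! t)")
      case True
      with False have "L \<le> uss_nmin ?s" by simp
      have "length s * L \<le> FL L (uss_step ?s (\<omega> !! t))"
        using FL_full[OF \<open>L \<le> uss_nmin ?s\<close>] FL_mono_step[of L ?s "\<omega> !! t"] by simp
      then show ?thesis by (simp add: runf_Suc Kf_Suc)
    next
      case False
      then show ?thesis using Suc FL_mono_step[of L ?s "\<omega> !! t"] by (simp add: runf_Suc Kf_Suc)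
    qed
  qed
qed

definition step' :: "uss_sketch \<Rightarrow> nat \<Rightarrow> nat \<Rightarrow> bool \<Rightarrow> uss_sketch" where
 "step' s x j b = (if Some x \<in> fst ` set s
     then map (\<lambda>(l, c). if l = Some x then (l, Suc c) else (l, c)) s
     else (let n = uss_nmin s;
               mins = filter (\<lambda>i. snd (s ! i) = n) [0..<length s];
               i = mins ! j;
               l = fst (s ! i); c = snd (s ! i)
           in s[i := (if b then Some x else l, Suc c)]))"

lemma step_eq: "uss_step s r = step' s (fst r)
   (nat \<lfloor>fst (snd r) * real (length (filter (\<lambda>i. snd (s ! i) = uss_nmin s) [0..<length s]))\<rfloor>)
   (snd (snd r) < 1 / real (Suc (uss_nmin s)))"
  by (cases r) (simp add: uss_step_def step'_def Let_def)

lemma meas_step[measurable]: "(\<lambda>r. uss_step s r) \<in> uss_row P \<rightarrow>\<^sub>M count_space UNIV"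
  unfolding step_eq uss_row_def by measurable

lemma meas_ind[measurable]: "(\<lambda>r. ind s r) \<in> uss_row P \<rightarrow>\<^sub>M count_space UNIV"
  unfolding ind_def uss_row_def by measurable

lemma meas_runf[measurable]: "(\<lambda>\<omega>. runf s t \<omega>) \<in> stream_space (uss_row P) \<rightarrow>\<^sub>M count_space UNIV"
proof (induction t arbitrary: s)
  case 0 then show ?case by simp
next
  case (Suc t)
  show ?case unfolding runf.simps(2)
    by (rule measurable_compose_countable[where f="\<lambda>s' \<omega>. runf s' t (stl \<omega>)" and g="\<lambda>\<omega>. uss_step s (shd \<omega>)"])
       (use Suc in measurable)
qed

lemma meas_Kf[measurable]: "(\<lambda>\<omega>. Kf s t \<omega>) \<in> stream_space (uss_row P) \<rightarrow>\<^sub>M count_space UNIV"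
proof (induction t arbitrary: s)
  case 0 then show ?case by simp
next
  case (Suc t)
  have "(\<lambda>\<omega>. Kf (uss_step s (shd \<omega>)) t (stl \<omega>)) \<in> stream_space (uss_row P) \<rightarrow>\<^sub>M count_space UNIV"
    by (rule measurable_compose_countable[where f="\<lambda>s' \<omega>. Kf s' t (stl \<omega>)" and g="\<lambda>\<omega>. uss_step s (shd \<omega>)"])
       (use Suc in measurable)
  then show ?case unfolding Kf.simps(2) by measurable
qed

abbreviation "U01 \<equiv> uniform_measure lborel {0..<1::real}"

lemma probU: "prob_space U01"
  by (rule prob_space_uniform_measure) auto

lemma space_U[simp]: "space U01 = UNIV" by simp

lemma prob_row: "prob_space (uss_row P)"
  unfolding uss_row_def
  by (intro prob_space_pair probU prob_space_measure_pmf)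

lemma space_row[simp]: "space (uss_row P) = UNIV"
  unfolding uss_row_def by (simp add: space_pair_measure)

lemma emeasure_ind:
  "emeasure (uss_row P) {r \<in> space (uss_row P). ind s r} = emeasure (measure_pmf P) {x. Some x \<notin> fst ` set s}"
proof -
  have eq: "{r \<in> space (uss_row P). ind s r} = {x. Some x \<notin> fst ` set s} \<times> ({0..<1} \<times> UNIV)"
    by (force simp: ind_def)
  interpret UU: prob_space "U01 \<Otimes>\<^sub>M U01" by (intro prob_space_pair probU)
  interpret U: prob_space U01 by (rule probU)
  have "emeasure (U01 \<Otimes>\<^sub>M U01) ({0..<1} \<times> UNIV) = emeasure U01 {0..<1} * emeasure U01 UNIV"
    by (rule U.emeasure_pair_measure_Times) auto
  also have "\<dots> = 1" using U.emeasure_space_1 by (simp add: emeasure_uniform_measure_1)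
  finally have 1: "emeasure (U01 \<Otimes>\<^sub>M U01) ({0..<1} \<times> UNIV) = 1" .
  have "emeasure (uss_row P) ({x. Some x \<notin> fst ` set s} \<times> ({0..<1} \<times> UNIV)) = emeasure (measure_pmf P) {x. Some x \<notin> fst ` set s}"
    unfolding uss_row_def by (subst UU.emeasure_pair_measure_Times) (auto simp: 1)
  then show ?thesis by (simp only: eq)
qed

lemma sum_swap:
  fixes p :: "nat \<Rightarrow> real"
  assumes "antimono p" "finite L" "card L \<le> m" "\<And>x. p x \<ge> 0"
  shows "sum p L \<le> sum p {..<m}"
proof -
  let ?A = "{..<m}"
  have c1: "card L = card (L \<inter> ?A) + card (L - ?A)"
    using assms(2) by (metis Diff_Diff_Int card_Diff_subset_Int finite_Diff Int_lower1 card_Un_disjoint Un_Diff_Int Diff_disjoint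
        inf_commute card_Int_Diff)
  have c2: "m = card (L \<inter> ?A) + card (?A - L)"
    by (metis card_Int_Diff card_lessThan finite_lessThan inf_commute)
  have cc: "card (L - ?A) \<le> card (?A - L)" using c1 c2 assms(3) by linarith
  have "sum p (L - ?A) \<le> of_nat (card (L - ?A)) * p m"
    by (intro sum_bounded_above) (use assms(1) in \<open>auto simp: antimono_def\<close>)
  also have "\<dots> \<le> of_nat (card (?A - L)) * p m"
    using cc assms(4)[of m] by (intro mult_right_mono) auto
  also have "\<dots> \<le> sum p (?A - L)"
    by (intro sum_bounded_below) (use assms(1) in \<open>auto simp: antimono_def\<close>)
  finally have "sum p (L - ?A) \<le> sum p (?A - L)" .
  moreover have "sum p L = sum p (L \<inter> ?A) + sum p (L - ?A)"
    using assms(2) by (metis sum.Int_Diff)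
  moreover have "sum p ?A = sum p (L \<inter> ?A) + sum p (?A - L)"
    by (metis sum.Int_Diff finite_lessThan inf_commute)
  ultimately show ?thesis by linarith
qed

lemma prob_ind_ge:
  assumes "antimono (pmf P)" "length s \<le> m"
  shows "measure_pmf.prob P {m..} \<le> measure (uss_row P) {r \<in> space (uss_row P). ind s r}"
proof -
  define Lb where "Lb = Some -` (fst ` set s)"
  have fin: "finite Lb" unfolding Lb_def by (intro finite_vimageI) auto
  have "card Lb \<le> card (fst ` set s)" unfolding Lb_def
    by (intro card_inj_on_le[of Some]) auto
  also have "\<dots> \<le> card (set s)" by (rule card_image_le) auto
  also have "\<dots> \<le> length s" by (rule card_length)
  finally have cL: "card Lb \<le> m" using assms(2) by linarith
  have "measure (uss_row P) {r \<in> space (uss_row P). ind s r} = measure_pmf.prob P (UNIV - Lb)"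
    unfolding measure_def emeasure_ind by (simp add: Lb_def Diff_eq Compl_eq)
  also have "\<dots> = 1 - measure_pmf.prob P Lb"
    using measure_pmf.prob_compl[of Lb P] by simp
  finally have e1: "measure (uss_row P) {r \<in> space (uss_row P). ind s r} = 1 - measure_pmf.prob P Lb" .
  have "measure_pmf.prob P Lb = sum (pmf P) Lb" using fin by (rule measure_measure_pmf_finite)
  also have "\<dots> \<le> sum (pmf P) {..<m}" by (rule sum_swap[OF assms(1) fin cL]) simp
  also have "\<dots> = measure_pmf.prob P {..<m}" by (simp add: measure_measure_pmf_finite)
  also have "\<dots> = 1 - measure_pmf.prob P {m..}"
  proof -
    have "UNIV - {m..} = {..<m}" by auto
    then show ?thesis using measure_pmf.prob_compl[of "{m..}" P] by simp
  qed
  finally show ?thesis using e1 by linarith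
qed

lemma exp_ind:
  assumes "antimono (pmf P)" "length s \<le> m" "0 \<le> l"
  shows "(\<integral>\<^sup>+ r. ennreal (exp (- l * (if ind s r then 1 else 0))) \<partial>uss_row P)
     \<le> ennreal (1 - (1 - exp (- l)) * measure_pmf.prob P {m..})"
proof -
  interpret R: prob_space "uss_row P" by (rule prob_row)
  define A where "A = {r \<in> space (uss_row P). ind s r}"
  have A[measurable]: "A \<in> sets (uss_row P)" unfolding A_def by measurable
  define p where "p = measure (uss_row P) A"
  have pa: "measure_pmf.prob P {m..} \<le> p" unfolding p_def A_def by (rule prob_ind_ge[OF assms(1,2)])
  have "(\<integral>\<^sup>+ r. ennreal (exp (- l * (if ind s r then 1 else 0))) \<partial>uss_row P)
      = (\<integral>\<^sup>+ r. ennreal (exp (- l)) * indicator A r + indicator (space (uss_row P) - A) r \<partial>uss_row P)"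
    by (intro nn_integral_cong) (auto simp: A_def split: split_indicator)
  also have "\<dots> = ennreal (exp (- l)) * emeasure (uss_row P) A + emeasure (uss_row P) (space (uss_row P) - A)"
  proof -
    have "UNIV - A \<in> sets (uss_row P)" using sets.compl_sets[OF A] by simp
    then show ?thesis by (subst nn_integral_add) (auto simp: nn_integral_cmult_indicator)
  qed
  also have "\<dots> = ennreal (exp (- l) * p + (1 - p))"
    using R.prob_compl[OF A] by (simp add: R.emeasure_eq_measure p_def ennreal_mult' ennreal_plus[symmetric])
  also have "\<dots> \<le> ennreal (1 - (1 - exp (- l)) * measure_pmf.prob P {m..})"
  proof (rule ennreal_leI)
    have "exp (- l) \<le> 1" using assms(3) by simp
    then have "(1 - exp (- l)) * measure_pmf.prob P {m..} \<le> (1 - exp (- l)) * p"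
      using pa by (intro mult_left_mono) auto
    then show "exp (- l) * p + (1 - p) \<le> 1 - (1 - exp (- l)) * measure_pmf.prob P {m..}"
      by (simp add: algebra_simps)
  qed
  finally show ?thesis .
qed

lemma q_nonneg:
  assumes "0 \<le> (l::real)"
  shows "0 \<le> 1 - (1 - exp (- l)) * measure_pmf.prob P A"
proof -
  have "measure_pmf.prob P A \<le> 1" by simp
  moreover have "1 - exp (- l) \<le> 1" by simp
  moreover have "0 \<le> 1 - exp (- l)" using assms by simp
  ultimately have "(1 - exp (- l)) * measure_pmf.prob P A \<le> 1 * 1"
    by (intro mult_mono) auto
  then show ?thesis by simp
qed

lemma mgf:
  assumes "antimono (pmf P)" "0 \<le> l" "length s \<le> m"
  shows "(\<integral>\<^sup>+\<omega>. ennreal (exp (- l * real (Kf s t \<omega>))) \<partial>stream_space (uss_row P))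
     \<le> ennreal ((1 - (1 - exp (- l)) * measure_pmf.prob P {m..}) ^ t)"
  using assms(3)
proof (induction t arbitrary: s)
  case 0
  interpret R: prob_space "uss_row P" by (rule prob_row)
  interpret S: prob_space "stream_space (uss_row P)" by (rule R.prob_space_stream_space)
  show ?case by (simp add: S.emeasure_space_1)
next
  case (Suc t)
  interpret R: prob_space "uss_row P" by (rule prob_row)
  interpret S: prob_space "stream_space (uss_row P)" by (rule R.prob_space_stream_space)
  define q where "q = 1 - (1 - exp (- l)) * measure_pmf.prob P {m..}"
  have q0: "0 \<le> q"
  proof -
    have "measure_pmf.prob P {m..} \<le> 1" by simp
    moreover have "1 - exp (- l) \<le> 1" by simp
    moreover have "0 \<le> 1 - exp (- l)" using assms(2) by simp
    ultimately have "(1 - exp (- l)) * measure_pmf.prob P {m..} \<le> 1 * 1"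
      by (intro mult_mono) auto
    then show ?thesis unfolding q_def by simp
  qed
  let ?I = "\<lambda>x. ennreal (exp (- l * (if ind s x then 1 else 0)))"
  have "(\<integral>\<^sup>+\<omega>. ennreal (exp (- l * real (Kf s (Suc t) \<omega>))) \<partial>stream_space (uss_row P))
     = (\<integral>\<^sup>+x. (\<integral>\<^sup>+X. ennreal (exp (- l * real (Kf s (Suc t) (x ## X)))) \<partial>stream_space (uss_row P)) \<partial>uss_row P)"
    by (rule R.nn_integral_stream_space) measurable
  also have "\<dots> = (\<integral>\<^sup>+x. ?I x * (\<integral>\<^sup>+X. ennreal (exp (- l * real (Kf (uss_step s x) t X))) \<partial>stream_space (uss_row P)) \<partial>uss_row P)"
  proof (intro nn_integral_cong)
    fix x
    have "(\<integral>\<^sup>+X. ennreal (exp (- l * real (Kf s (Suc t) (x ## X)))) \<partial>stream_space (uss_row P))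
       = (\<integral>\<^sup>+X. ?I x * ennreal (exp (- l * real (Kf (uss_step s x) t X))) \<partial>stream_space (uss_row P))"
      by (intro nn_integral_cong) (simp add: Kf.simps(2) ennreal_mult'[symmetric] exp_add[symmetric] algebra_simps)
    also have "\<dots> = ?I x * (\<integral>\<^sup>+X. ennreal (exp (- l * real (Kf (uss_step s x) t X))) \<partial>stream_space (uss_row P))"
      by (rule nn_integral_cmult) measurable
    finally show "(\<integral>\<^sup>+X. ennreal (exp (- l * real (Kf s (Suc t) (x ## X)))) \<partial>stream_space (uss_row P))
       = ?I x * (\<integral>\<^sup>+X. ennreal (exp (- l * real (Kf (uss_step s x) t X))) \<partial>stream_space (uss_row P))" .
  qed
  also have "\<dots> \<le> (\<integral>\<^sup>+x. ?I x * ennreal (q ^ t) \<partial>uss_row P)"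
    by (intro nn_integral_mono mult_left_mono) (use Suc in \<open>auto simp: q_def\<close>)
  also have "\<dots> = (\<integral>\<^sup>+x. ?I x \<partial>uss_row P) * ennreal (q ^ t)"
    by (rule nn_integral_multc) measurable
  also have "\<dots> \<le> ennreal q * ennreal (q ^ t)"
    by (intro mult_right_mono exp_ind[OF assms(1) Suc.prems assms(2), folded q_def]) auto
  also have "\<dots> = ennreal (q ^ Suc t)" using q0 by (simp add: ennreal_mult'[symmetric])
  finally show ?case unfolding q_def .
qed

lemma choose_l:
  fixes c a :: real
  assumes "c < a"
  shows "\<exists>l>0. exp (l * c) * (1 - (1 - exp (- l)) * a) < 1"
proof -
  define g where "g x = exp (x * c) * (1 - (1 - exp (- x)) * a)" for x
  have "(g has_real_derivative (c - a)) (at 0)"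
  proof -
    have "(g has_real_derivative (exp (0 * c) * c * (1 - (1 - exp (- 0)) * a) + exp (0 * c) * (- (exp (- 0) * a)))) (at 0)"
      unfolding g_def by (auto intro!: derivative_eq_intros)
    then show ?thesis by simp
  qed
  moreover have "c - a < 0" using assms by simp
  ultimately have "\<exists>d > 0. \<forall>h > 0. h < d \<longrightarrow> g 0 > g (0 + h)"
    by (rule DERIV_neg_dec_right)
  then obtain d where d: "d > 0" "\<And>h. h > 0 \<Longrightarrow> h < d \<Longrightarrow> g 0 > g (0 + h)" by blast
  have "g (d/2) < g 0" using d(2)[of "d/2"] d(1) by simp
  moreover have "g 0 = 1" by (simp add: g_def)
  ultimately show ?thesis using d(1) by (intro exI[of _ "d/2"]) (simp add: g_def)
qed

lemma path:
  assumes "m > 0"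
  shows "real (Kf (uss_init m) t \<omega>) - real m < real m * real (uss_Nmin m t \<omega>)"
proof -
  define K where "K = Kf (uss_init m) t \<omega>"
  have ne: "uss_init m \<noteq> []" using assms by (simp add: uss_init_def)
  have len: "length (uss_init m) = m" by (simp add: uss_init_def)
  have "min K (m * (K div m)) \<le> FL (K div m) (runf (uss_init m) t \<omega>)"
    using invariant[OF ne, of t \<omega> "K div m"] unfolding K_def len .
  moreover have "min K (m * (K div m)) = m * (K div m)"
    by (rule min_absorb2) (rule times_div_less_eq_dividend)
  ultimately have "length (runf (uss_init m) t \<omega>) * (K div m) \<le> FL (K div m) (runf (uss_init m) t \<omega>)"
    using len by simp
  then have "K div m \<le> uss_Nmin m t \<omega>"
    unfolding uss_Nmin_def uss_run_runf using ne
    by (intro nmin_ge) (auto simp: len, metis len runf_length list.size(3) assms less_irrefl)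
  then have "real m * real (K div m) \<le> real m * real (uss_Nmin m t \<omega>)"
    by (intro mult_left_mono) auto
  moreover have "real K = real m * real (K div m) + real (K mod m)"
    by (metis div_mult_mod_eq of_nat_add of_nat_mult mult.commute)
  moreover have "K mod m < m" using assms by simp
  ultimately show ?thesis unfolding K_def[symmetric] by linarith
qed

lemma markov:
  fixes c :: real and t m :: nat
  assumes "antimono (pmf P)" "0 \<le> l"
  defines "S \<equiv> stream_space (uss_row P)"
  defines "E \<equiv> {\<omega> \<in> space S. real (Kf (uss_init m) t \<omega>) \<le> c * real t}"
  shows "measure S E \<le> (exp (l * c) * (1 - (1 - exp (- l)) * measure_pmf.prob P {m..})) ^ t"
proof -
  interpret R: prob_space "uss_row P" by (rule prob_row)
  interpret S: prob_space S unfolding S_def by (rule R.prob_space_stream_space)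
  define q where "q = 1 - (1 - exp (- l)) * measure_pmf.prob P {m..}"
  have E[measurable]: "E \<in> sets S" unfolding E_def S_def by measurable
  have "ennreal (exp (- l * (c * real t)) * measure S E) = (\<integral>\<^sup>+\<omega>. ennreal (exp (- l * (c * real t))) * indicator E \<omega> \<partial>S)"
    by (simp add: nn_integral_cmult_indicator S.emeasure_eq_measure ennreal_mult')
  also have "\<dots> \<le> (\<integral>\<^sup>+\<omega>. ennreal (exp (- l * real (Kf (uss_init m) t \<omega>))) \<partial>S)"
  proof (intro nn_integral_mono)
    fix \<omega> assume "\<omega> \<in> space S"
    show "ennreal (exp (- l * (c * real t))) * indicator E \<omega> \<le> ennreal (exp (- l * real (Kf (uss_init m) t \<omega>)))"
    proof (cases "\<omega> \<in> E")
      case True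
      then have "real (Kf (uss_init m) t \<omega>) \<le> c * real t" by (simp add: E_def)
      then have "- l * (c * real t) \<le> - l * real (Kf (uss_init m) t \<omega>)"
        using assms(2) by (intro mult_left_mono_neg) auto
      then show ?thesis using True by (simp add: ennreal_leI)
    qed simp
  qed
  also have "\<dots> \<le> ennreal (q ^ t)"
    unfolding S_def q_def by (rule mgf[OF assms(1,2)]) (simp add: uss_init_def)
  finally have "exp (- l * (c * real t)) * measure S E \<le> q ^ t"
    using q_nonneg[OF assms(2), of P "{m..}"] by (subst (asm) ennreal_le_iff) (auto simp: q_def)
  then have "measure S E \<le> q ^ t * exp (l * c * real t)"
    by (simp add: exp_minus field_simps)
  also have "\<dots> = (exp (l * c) * q) ^ t"
    by (simp add: power_mult_distrib exp_of_nat_mult[symmetric] mult.commute)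
  finally show ?thesis unfolding q_def .
qed

theorem lemma1:
  fixes P :: "nat pmf" and m :: nat and \<alpha>' :: real
  assumes "m > 0"
    and "antimono (pmf P)"
    and "\<alpha>' < measure_pmf.prob P {m..}"
  shows "AE \<omega> in stream_space (uss_row P).
           eventually (\<lambda>t. real (uss_Nmin m t \<omega>) > \<alpha>' * real t / real m) sequentially"
proof -
  interpret R: prob_space "uss_row P" by (rule prob_row)
  interpret S: prob_space "stream_space (uss_row P)" by (rule R.prob_space_stream_space)
  define S where "S = stream_space (uss_row P)"
  define \<alpha> where "\<alpha> = measure_pmf.prob P {m..}"
  define c where "c = (\<alpha>' + \<alpha>) / 2"
  have c1: "\<alpha>' < c" "c < \<alpha>" using assms(3) unfolding c_def \<alpha>_def by auto
  obtain l where l: "l > 0" "exp (l * c) * (1 - (1 - exp (- l)) * \<alpha>) < 1"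
    using choose_l[OF c1(2)] by blast
  define r where "r = exp (l * c) * (1 - (1 - exp (- l)) * \<alpha>)"
  have r0: "0 \<le> r" unfolding r_def \<alpha>_def using q_nonneg[of l P "{m..}"] l(1) by simp
  have r1: "r < 1" using l(2) by (simp add: r_def)
  define E where "E t = {\<omega> \<in> space S. real (Kf (uss_init m) t \<omega>) \<le> c * real t}" for t
  have E[measurable]: "E t \<in> sets S" for t unfolding E_def S_def by measurable
  have mE: "measure S (E t) \<le> r ^ t" for t
    unfolding E_def r_def S_def \<alpha>_def by (rule markov[OF assms(2)]) (use l in simp)
  have "AE \<omega> in S. eventually (\<lambda>t. \<omega> \<in> space S - E t) sequentially"
  proof (rule borel_cantelli_AE1)
    show "emeasure S (E t) < \<infinity>" for t unfolding S_def by (simp add: S.emeasure_eq_measure)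
    show "summable (\<lambda>t. measure S (E t))"
      by (rule summable_comparison_test'[OF summable_geometric[of r]]) (use r0 r1 mE in auto)
  qed simp
  then show ?thesis unfolding S_def[symmetric]
  proof (rule eventually_mono)
    fix \<omega> assume ev: "eventually (\<lambda>t. \<omega> \<in> space S - E t) sequentially"
    have ev2: "eventually (\<lambda>t. real m / (c - \<alpha>') \<le> real t) sequentially"
    proof -
      have "eventually (\<lambda>t. nat \<lceil>real m / (c - \<alpha>')\<rceil> \<le> t) sequentially"
        by (rule eventually_ge_at_top)
      then show ?thesis
        by (rule eventually_mono) (meson real_nat_ceiling_ge of_nat_le_iff order_trans)
    qed
    show "eventually (\<lambda>t. real (uss_Nmin m t \<omega>) > \<alpha>' * real t / real m) sequentially"
      using eventually_conj[OF ev ev2]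
    proof (rule eventually_mono)
      fix t assume a: "\<omega> \<in> space S - E t \<and> real m / (c - \<alpha>') \<le> real t"
      then have K: "c * real t < real (Kf (uss_init m) t \<omega>)" by (auto simp: E_def)
      have "real m \<le> (c - \<alpha>') * real t" using a c1(1) by (simp add: field_simps)
      then have "\<alpha>' * real t < real m * real (uss_Nmin m t \<omega>)"
        using K path[OF assms(1), of t \<omega>] by (simp add: algebra_simps)
      then show "real (uss_Nmin m t \<omega>) > \<alpha>' * real t / real m"
        using assms(1) by (simp add: pos_divide_less_eq mult.commute)
    qed
  qed
qed

end
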